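(* Let $K(u)\in\mathrm{End}(\mathbb C^d\otimes\mathbb C^{d_B})$ be an irreducible K-matrix in the representation $(\rho^{(1)},\rho^{(2)})$ with asymptotic expansion $K(u)=\tilde\kappa+O(u^{-1})$, $\tilde\kappa\in\mathrm{End}(\mathbb C^d\otimes\mathbb C^{d_B})$. Then $\tilde\kappa=\kappa\otimes1$ for some $\kappa\in\mathrm{End}(\mathbb C^d)$.
   Context: Let $\mathfrak g$ be a complex simple Lie algebra with basis $\{X_A\}$, Killing form $B_{AB}=\mathrm{Tr}(\mathrm{ad}_{X_A}\circ\mathrm{ad}_{X_B})$ and inverse $B^{AB}$ (repeated indices summed). Let $\rho^{(1)},\rho^{(2)}:\mathfrak g\to\mathrm{End}(\mathbb C^d)$ be faithful representations and $C^{(ij)}=B^{AB}\rho^{(i)}(X_A)\otimes\rho^{(j)}(X_B)$. For $i,j\in\{1,2\}$ let $R^{(ij)}(u)\in\mathrm{End}(\mathbb C^d\otimes\mathbb C^d)$ be quasi-classical R-matrices: they satisfy $R^{(ij)}_{12}(u)R^{(ik)}_{13}(u+v)R^{(jk)}_{23}(v)=R^{(jk)}_{23}(v)R^{(ik)}_{13}(u+v)R^{(ij)}_{12}(u)$ and $R^{(ij)}(u)=1+\frac1u C^{(ij)}+O(u^{-2})$ as $u\to\infty$. Lower indices denote tensor factors of $\mathbb C^d\otimes\mathbb C^d\otimes\mathbb C^{d_B}$, and $R_{21}=P_{12}R_{12}P_{12}$ with $P$ the flip. A K-matrix in the representation $(\rho^{(1)},\rho^{(2)})$ with boundary space $\mathbb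 C^{d_B}$ is $K(u)\in\mathrm{End}(\mathbb C^d\otimes\mathbb C^{d_B})$, with an asymptotic expansion in powers of $1/u$, satisfying the boundary Yang–Baxter equation $R^{(11)}_{12}(u-v)K_{13}(u)R^{(12)}_{21}(u+v)K_{23}(v)=K_{23}(v)R^{(12)}_{12}(u+v)K_{13}(u)R^{(22)}_{21}(u-v)$. Writing $K(u)=\sum_{i,j}E_{ij}\otimes\Psi^{ij}(u)$ with $E_{ij}$ the elementary matrices of $\mathrm{End}(\mathbb C^d)$ and $\Psi^{ij}(u)\in\mathrm{End}(\mathbb C^{d_B})$, $K$ is irreducible if there is no proper nonzero subspace of $\mathbb C^{d_B}$ invariant under all $\Psi^{ij}(u)$ (all $i,j$ and $u$). *)

theory Defs
  imports Complex_Main "HOL-Library.Landau_Symbols"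
begin

text \<open>Operators on a finite-dimensional space with basis indexed by a finite type 'i:
  an element of End(C^I) is a complex matrix indexed by 'i. Tensor products of spaces
  correspond to product index types.\<close>

type_synonym 'i op = "'i \<Rightarrow> 'i \<Rightarrow> complex"

definition mmul :: "('i::finite) op \<Rightarrow> 'i op \<Rightarrow> 'i op" where
  "mmul M N = (\<lambda>x y. \<Sum>z\<in>UNIV. M x z * N z y)"

definition idm :: "'i op" where
  "idm = (\<lambda>x y. if x = y then 1 else 0)"

definition mv :: "('i::finite) op \<Rightarrow> ('i \<Rightarrow> complex) \<Rightarrow> ('i \<Rightarrow> complex)" where
  "mv M v = (\<lambda>x. \<Sum>y\<in>UNIV. M x y * v y)"

text \<open>Lie algebra with basis X_A (A :: 'a) and structure constants
  [X_A, X_B] = sum_C f A B C X_C; elements are coordinate vectors 'a => complex.\<close>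

definition lie_bracket :: "('a::finite \<Rightarrow> 'a \<Rightarrow> 'a \<Rightarrow> complex) \<Rightarrow> ('a \<Rightarrow> complex) \<Rightarrow> ('a \<Rightarrow> complex) \<Rightarrow> ('a \<Rightarrow> complex)" where
  "lie_bracket f x y = (\<lambda>C. \<Sum>A\<in>UNIV. \<Sum>B\<in>UNIV. x A * y B * f A B C)"

definition is_lie_algebra :: "('a::finite \<Rightarrow> 'a \<Rightarrow> 'a \<Rightarrow> complex) \<Rightarrow> bool" where
  "is_lie_algebra f \<longleftrightarrow>
     (\<forall>A B C. f A B C = - f B A C) \<and>
     (\<forall>A B C E. (\<Sum>D\<in>UNIV. f A B D * f D C E + f B C D * f D A E + f C A D * f D B E) = 0)"

definition lie_ideal :: "('a::finite \<Rightarrow> 'a \<Rightarrow> 'a \<Rightarrow> complex) \<Rightarrow> ('a \<Rightarrow> complex) set \<Rightarrow> bool" where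
  "lie_ideal f I \<longleftrightarrow>
     (\<lambda>_. 0) \<in> I \<and>
     (\<forall>x\<in>I. \<forall>y\<in>I. (\<lambda>A. x A + y A) \<in> I) \<and>
     (\<forall>c. \<forall>x\<in>I. (\<lambda>A. c * x A) \<in> I) \<and>
     (\<forall>x. \<forall>y\<in>I. lie_bracket f x y \<in> I)"

definition simple_lie_algebra :: "('a::finite \<Rightarrow> 'a \<Rightarrow> 'a \<Rightarrow> complex) \<Rightarrow> bool" where
  "simple_lie_algebra f \<longleftrightarrow>
     is_lie_algebra f \<and>
     (\<exists>x y. lie_bracket f x y \<noteq> (\<lambda>_. 0)) \<and>
     (\<forall>I. lie_ideal f I \<longrightarrow> I = {\<lambda>_. 0} \<or> I = UNIV)"

text \<open>Killing form B_AB = Tr(ad X_A o ad X_B), where (ad X_A)_{DC} = f A C D.\<close>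

definition killing :: "('a::finite \<Rightarrow> 'a \<Rightarrow> 'a \<Rightarrow> complex) \<Rightarrow> 'a op" where
  "killing f = (\<lambda>A B. \<Sum>C\<in>UNIV. \<Sum>D\<in>UNIV. f A C D * f B D C)"

definition killing_inv :: "('a::finite \<Rightarrow> 'a \<Rightarrow> 'a \<Rightarrow> complex) \<Rightarrow> 'a op" where
  "killing_inv f = (SOME M. mmul M (killing f) = idm \<and> mmul (killing f) M = idm)"

definition is_rep :: "('a::finite \<Rightarrow> 'a \<Rightarrow> 'a \<Rightarrow> complex) \<Rightarrow> ('a \<Rightarrow> ('d::finite) op) \<Rightarrow> bool" where
  "is_rep f \<rho> \<longleftrightarrow>
     (\<forall>A B x y. mmul (\<rho> A) (\<rho> B) x y - mmul (\<rho> B) (\<rho> A) x y = (\<Sum>C\<in>UNIV. f A B C * \<rho> C x y))"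

definition faithful :: "('a::finite \<Rightarrow> ('d::finite) op) \<Rightarrow> bool" where
  "faithful \<rho> \<longleftrightarrow> (\<forall>c. (\<forall>x y. (\<Sum>A\<in>UNIV. c A * \<rho> A x y) = 0) \<longrightarrow> (\<forall>A. c A = 0))"

definition casimir :: "('a::finite \<Rightarrow> 'a \<Rightarrow> 'a \<Rightarrow> complex) \<Rightarrow> ('a \<Rightarrow> ('d::finite) op) \<Rightarrow> ('a \<Rightarrow> 'd op) \<Rightarrow> ('d \<times> 'd) op" where
  "casimir f \<rho>1 \<rho>2 = (\<lambda>(x1, x2) (y1, y2).
      \<Sum>A\<in>UNIV. \<Sum>B\<in>UNIV. killing_inv f A B * \<rho>1 A x1 y1 * \<rho>2 B x2 y2)"

text \<open>Embeddings of operators into a triple tensor product (lower indices 12, 13, 23)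
  and the flip conjugation R_21 = P R P.\<close>

definition op12 :: "('x \<times> 'y) op \<Rightarrow> ('x \<times> 'y \<times> 'z) op" where
  "op12 M = (\<lambda>(a, b, c) (a', b', c'). M (a, b) (a', b') * (if c = c' then 1 else 0))"

definition op13 :: "('x \<times> 'z) op \<Rightarrow> ('x \<times> 'y \<times> 'z) op" where
  "op13 M = (\<lambda>(a, b, c) (a', b', c'). M (a, c) (a', c') * (if b = b' then 1 else 0))"

definition op23 :: "('y \<times> 'z) op \<Rightarrow> ('x \<times> 'y \<times> 'z) op" where
  "op23 M = (\<lambda>(a, b, c) (a', b', c'). M (b, c) (b', c') * (if a = a' then 1 else 0))"

definition flip :: "('x \<times> 'x) op \<Rightarrow> ('x \<times> 'x) op" where
  "flip R = (\<lambda>(a, b) (a', b'). R (b, a) (b', a'))"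

text \<open>Quasi-classical R-matrices R^{(ij)}(u), i,j in {1,2}, defined away from a finite
  set SR of spectral parameters (poles).\<close>

definition quasi_classical_R_family ::
  "('a::finite \<Rightarrow> 'a \<Rightarrow> 'a \<Rightarrow> complex) \<Rightarrow> (nat \<Rightarrow> 'a \<Rightarrow> ('d::finite) op)
   \<Rightarrow> (nat \<Rightarrow> nat \<Rightarrow> complex \<Rightarrow> ('d \<times> 'd) op) \<Rightarrow> complex set \<Rightarrow> bool" where
  "quasi_classical_R_family f \<rho> R SR \<longleftrightarrow>
     finite SR \<and>
     (\<forall>i\<in>{1,2}. \<forall>j\<in>{1,2}. \<forall>k\<in>{1,2}. \<forall>u v. u \<notin> SR \<longrightarrow> v \<notin> SR \<longrightarrow> u + v \<notin> SR \<longrightarrow>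
        mmul (mmul (op12 (R i j u)) (op13 (R i k (u + v)))) (op23 (R j k v))
        = (mmul (mmul (op23 (R j k v)) (op13 (R i k (u + v)))) (op12 (R i j u))
             :: ('d \<times> 'd \<times> 'd) op)) \<and>
     (\<forall>i\<in>{1,2}. \<forall>j\<in>{1,2}. \<forall>x y.
        (\<lambda>u. R i j u x y - (idm x y + casimir f (\<rho> i) (\<rho> j) x y / u))
          \<in> O[at_infinity](\<lambda>u. 1 / u ^ 2))"

definition has_asymp_expansion :: "(complex \<Rightarrow> 'i op) \<Rightarrow> (nat \<Rightarrow> 'i op) \<Rightarrow> bool" where
  "has_asymp_expansion F c \<longleftrightarrow>
     (\<forall>N x y. (\<lambda>u. F u x y - (\<Sum>n\<le>N. c n x y / u ^ n)) \<in> O[at_infinity](\<lambda>u. 1 / u ^ Suc N))"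

text \<open>K-matrix in representation (rho1, rho2), boundary space indexed by 'b, defined away
  from a finite set SK; satisfies the boundary Yang-Baxter equation on
  C^d (x) C^d (x) C^{d_B}.\<close>

definition K_matrix ::
  "(nat \<Rightarrow> nat \<Rightarrow> complex \<Rightarrow> (('d::finite) \<times> 'd) op) \<Rightarrow> complex set
   \<Rightarrow> (complex \<Rightarrow> ('d \<times> ('b::finite)) op) \<Rightarrow> complex set \<Rightarrow> bool" where
  "K_matrix R SR K SK \<longleftrightarrow>
     finite SK \<and>
     (\<exists>c. has_asymp_expansion K c) \<and>
     (\<forall>u v. u \<notin> SK \<longrightarrow> v \<notin> SK \<longrightarrow> u - v \<notin> SR \<longrightarrow> u + v \<notin> SR \<longrightarrow>
        mmul (mmul (mmul (op12 (R 1 1 (u - v))) (op13 (K u))) (op12 (flip (R 1 2 (u + v)))))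
             (op23 (K v))
        = (mmul (mmul (mmul (op23 (K v)) (op12 (R 1 2 (u + v)))) (op13 (K u)))
             (op12 (flip (R 2 2 (u - v)))) :: ('d \<times> 'd \<times> 'b) op))"

definition csubspace :: "('i \<Rightarrow> complex) set \<Rightarrow> bool" where
  "csubspace W \<longleftrightarrow> (\<lambda>_. 0) \<in> W \<and>
     (\<forall>x\<in>W. \<forall>y\<in>W. (\<lambda>i. x i + y i) \<in> W) \<and> (\<forall>c. \<forall>x\<in>W. (\<lambda>i. c * x i) \<in> W)"

text \<open>Psi^{ij}(u)_{kl} = K(u)_{(i,k),(j,l)}; irreducible = no proper nonzero invariant subspace.\<close>

definition K_irreducible :: "(complex \<Rightarrow> (('d::finite) \<times> ('b::finite)) op) \<Rightarrow> complex set \<Rightarrow> bool" where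
  "K_irreducible K SK \<longleftrightarrow>
     \<not> (\<exists>W. csubspace W \<and> W \<noteq> {\<lambda>_. 0} \<and> W \<noteq> UNIV \<and>
          (\<forall>u. u \<notin> SK \<longrightarrow> (\<forall>i j. \<forall>w\<in>W. mv (\<lambda>k l. K u (i, k) (j, l)) w \<in> W)))"

end

theory Submission
  imports Defs "Jordan_Normal_Form.Spectral_Radius"
begin


lemma bigo_to_zero:
  assumes "f \<in> O[F](g)" "(g \<longlongrightarrow> 0) F"
  shows "((f::_\<Rightarrow>complex) \<longlongrightarrow> 0) F"
proof -
  obtain c where "c > 0" "eventually (\<lambda>x. norm (f x) \<le> c * norm (g x)) F"
    using assms(1) by (elim landau_o.bigE)
  then have "eventually (\<lambda>x. norm (f x) \<le> norm (g x) * c) F"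
    by (simp add: mult.commute)
  then show ?thesis using tendsto_0_le[OF assms(2)] by blast
qed

lemma inv_u_0: "((\<lambda>u::complex. 1 / u) \<longlongrightarrow> 0) at_infinity"
  using tendsto_inverse_0 by (simp add: inverse_eq_divide[symmetric])

lemma inv_u2_0: "((\<lambda>u::complex. 1 / u ^ 2) \<longlongrightarrow> 0) at_infinity"
proof -
  have "((\<lambda>u::complex. (1 / u) * (1/u)) \<longlongrightarrow> 0 * 0) at_infinity"
    by (intro tendsto_mult inv_u_0)
  then show ?thesis by (simp add: power2_eq_square)
qed

lemma at_infinity_nbot: "(at_infinity :: complex filter) \<noteq> bot"
proof
  assume "(at_infinity :: complex filter) = bot"
  then have "eventually (\<lambda>_. False) (at_infinity :: complex filter)" by simp
  then obtain b where "\<forall>x::complex. b \<le> norm x \<longrightarrow> False"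
    unfolding eventually_at_infinity by blast
  then show False by (metis norm_of_real abs_ge_self)
qed

lemma eventually_notin_finite:
  assumes "finite (S :: complex set)"
  shows "eventually (\<lambda>u. u \<notin> S) at_infinity"
  unfolding eventually_at_infinity
proof (intro exI allI impI)
  fix x :: complex assume "(\<Sum>y\<in>S. norm y) + 1 \<le> norm x"
  moreover have "x \<in> S \<Longrightarrow> norm x \<le> (\<Sum>y\<in>S. norm y)"
    using assms by (intro member_le_sum) auto
  ultimately show "x \<notin> S" by linarith
qed

lemma shift_inf: "filterlim (\<lambda>u::complex. u + c) at_infinity at_infinity"
  using tendsto_add_filterlim_at_infinity'[OF filterlim_ident tendsto_const] .

definition mlim :: "(complex \<Rightarrow> 'i op) \<Rightarrow> 'i op \<Rightarrow> bool" where
  "mlim F M \<longleftrightarrow> (\<forall>x y. ((\<lambda>u. F u x y) \<longlongrightarrow> M x y) at_infinity)"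

lemma mlim_mmul: "mlim F M \<Longrightarrow> mlim G N \<Longrightarrow> mlim (\<lambda>u. mmul (F u) (G u)) (mmul M N)"
  unfolding mlim_def mmul_def by (auto intro!: tendsto_sum tendsto_mult)

lemma mlim_op12: "mlim F M \<Longrightarrow> mlim (\<lambda>u. op12 (F u)) (op12 M)"
  unfolding mlim_def op12_def by (auto intro!: tendsto_mult)
lemma mlim_op13: "mlim F M \<Longrightarrow> mlim (\<lambda>u. op13 (F u)) (op13 M)"
  unfolding mlim_def op13_def by (auto intro!: tendsto_mult)
lemma mlim_op23: "mlim F M \<Longrightarrow> mlim (\<lambda>u. op23 (F u)) (op23 M)"
  unfolding mlim_def op23_def by (auto intro!: tendsto_mult)
lemma mlim_flip: "mlim F M \<Longrightarrow> mlim (\<lambda>u. flip (F u)) (flip M)"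
  unfolding mlim_def flip_def by auto
lemma mlim_const: "mlim (\<lambda>u. M) M"
  unfolding mlim_def by auto

lemma mlim_shift: "mlim F M \<Longrightarrow> mlim (\<lambda>u. F (u + c)) M"
  unfolding mlim_def using filterlim_compose[OF _ shift_inf] by blast



lemma eigen_exists:
  fixes M :: "('b::finite) op"
  shows "\<exists>lam w. w \<noteq> (\<lambda>_. 0) \<and> mv M w = (\<lambda>x. lam * w x)"
proof -
  define n where "n = card (UNIV :: 'b set)"
  have n0: "n > 0" unfolding n_def by (simp add: finite_UNIV_card_ge_0)
  obtain h where h: "bij_betw h {0..<n} (UNIV :: 'b set)"
    using ex_bij_betw_nat_finite[of "UNIV :: 'b set"] unfolding n_def by auto
  define A where "A = mat n n (\<lambda>(i,j). M (h i) (h j))"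
  have A: "A \<in> carrier_mat n n" unfolding A_def by simp
  from spectrum_non_empty[OF A n0] obtain lam where "eigenvalue A lam"
    unfolding spectrum_def by auto
  then obtain v where v: "v \<in> carrier_vec n" "v \<noteq> 0\<^sub>v n" "A *\<^sub>v v = lam \<cdot>\<^sub>v v"
    unfolding eigenvalue_def eigenvector_def using A by auto
  define g where "g = inv_into {0..<n} h"
  have gh: "\<And>i. i < n \<Longrightarrow> g (h i) = i" unfolding g_def using h
    by (simp add: bij_betw_imp_inj_on inv_into_f_f)
  have hg: "\<And>k. h (g k) = k" unfolding g_def using h
    by (auto simp add: bij_betw_def f_inv_into_f)
  have hg2: "\<And>k. g k < n" unfolding g_def using h
    by (metis atLeastLessThan_iff bij_betw_def inv_into_into iso_tuple_UNIV_I)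
  define w where "w = (\<lambda>k. v $ g k)"
  have "mv M w = (\<lambda>x. lam * w x)"
  proof
    fix k
    have "mv M w k = (\<Sum>j\<in>{0..<n}. M k (h j) * w (h j))"
      unfolding mv_def by (rule sum.reindex_bij_betw[OF h, symmetric])
    also have "\<dots> = (\<Sum>j\<in>{0..<n}. M (h (g k)) (h j) * v $ j)"
      unfolding w_def using gh hg hg2 by simp
    also have "\<dots> = (A *\<^sub>v v) $ g k"
      unfolding A_def using v(1) hg2[of k]
      by (simp add: mult_mat_vec_def scalar_prod_def)
    also have "\<dots> = lam * w k" unfolding w_def using v(3) v(1) hg2[of k] by simp
    finally show "mv M w k = lam * w k" .
  qed
  moreover have "w \<noteq> (\<lambda>_. 0)"
  proof
    assume "w = (\<lambda>_. 0)"
    then have "\<And>i. i < n \<Longrightarrow> v $ i = 0" unfolding w_def using gh by metis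
    then have "v = 0\<^sub>v n" using v(1) by (intro eq_vecI) auto
    with v(2) show False by simp
  qed
  ultimately show ?thesis by blast
qed

lemma schur:
  fixes M :: "('b::finite) op" and S :: "'b op set"
  assumes comm: "\<And>P. P \<in> S \<Longrightarrow> mmul M P = mmul P M"
    and irr: "\<not> (\<exists>W. csubspace W \<and> W \<noteq> {\<lambda>_. 0} \<and> W \<noteq> UNIV \<and> (\<forall>P\<in>S. \<forall>w\<in>W. mv P w \<in> W))"
  shows "\<exists>c. \<forall>k l. M k l = c * idm k l"
proof -
  obtain lam w0 where w0: "w0 \<noteq> (\<lambda>_. 0)" "mv M w0 = (\<lambda>x. lam * w0 x)"
    using eigen_exists by blast
  define W where "W = {w. mv M w = (\<lambda>x. lam * w x)}"
  have mvmul: "\<And>A B w. mv A (mv B w) = mv (mmul A B) w"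
    unfolding mv_def mmul_def
    by (auto simp: sum_distrib_left sum_distrib_right mult.assoc intro!: ext sum.swap)
  have sub: "csubspace W" unfolding csubspace_def W_def
  proof (intro conjI ballI allI; clarsimp)
    show "mv M (\<lambda>_. 0) = (\<lambda>x. 0)" unfolding mv_def by simp
  next
    fix x y assume "mv M x = (\<lambda>xa. lam * x xa)" "mv M y = (\<lambda>x. lam * y x)"
    then show "mv M (\<lambda>i. x i + y i) = (\<lambda>xa. lam * (x xa + y xa))"
      unfolding mv_def fun_eq_iff by (simp add: algebra_simps sum.distrib)
  next
    fix c x assume "mv M x = (\<lambda>xa. lam * x xa)"
    then show "mv M (\<lambda>i. c * x i) = (\<lambda>xa. lam * (c * x xa))"
      unfolding mv_def fun_eq_iff
      by (simp add: algebra_simps sum_distrib_left[symmetric])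
  qed
  have "W \<noteq> {\<lambda>_. 0}" using w0 unfolding W_def by auto
  moreover have inv: "\<forall>P\<in>S. \<forall>w\<in>W. mv P w \<in> W"
  proof (intro ballI)
    fix P w assume P: "P \<in> S" and w: "w \<in> W"
    have "mv M (mv P w) = mv P (mv M w)" using comm[OF P] by (simp add: mvmul)
    also have "\<dots> = mv P (\<lambda>x. lam * w x)" using w unfolding W_def by simp
    also have "\<dots> = (\<lambda>x. lam * mv P w x)" unfolding mv_def
      by (auto simp: sum_distrib_left algebra_simps)
    finally show "mv P w \<in> W" unfolding W_def by simp
  qed
  ultimately have "W = UNIV" using irr sub by blast
  have "M k l = lam * idm k l" for k l
  proof -
    have "(\<lambda>x. idm x l) \<in> W" using \<open>W = UNIV\<close> by simp
    then have "mv M (\<lambda>x. idm x l) k = lam * idm k l" unfolding W_def by simp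
    then show ?thesis unfolding mv_def idm_def by (simp add: if_distrib cong: if_cong)
  qed
  then show ?thesis by blast
qed



lemma sum_UNIV_triple:
  "(\<Sum>z\<in>(UNIV::('x::finite \<times> 'y::finite \<times> 'z::finite) set). g z) = (\<Sum>a\<in>UNIV. \<Sum>b\<in>UNIV. \<Sum>c\<in>UNIV. g (a, b, c))"
  by (simp add: UNIV_Times_UNIV[symmetric] sum.cartesian_product del: UNIV_Times_UNIV)

lemma mult_if01[simp]:
  "(x::complex) * (if c then 1 else 0) = (if c then x else 0)"
  "(if c then 1 else 0) * (x::complex) = (if c then x else 0)"
  "(if c then (x::complex) else 0) * y = (if c then x * y else 0)"
  "y * (if c then (x::complex) else 0) = (if c then y * x else 0)"
  by auto

lemma sum_if_const[simp]:
  "(\<Sum>c\<in>A. if P then f c else (0::complex)) = (if P then sum f A else 0)"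
  by auto

lemma extract_comm:
  fixes T P :: "('d::finite \<times> 'b::finite) op"
  assumes "(mmul (op13 T) (op23 P) :: ('d \<times> 'd \<times> 'b) op) = mmul (op23 P) (op13 T)"
  shows "mmul (\<lambda>k k'. T (a,k) (b,k')) (\<lambda>k l. P (i,k) (j,l)) = mmul (\<lambda>k l. P (i,k) (j,l)) (\<lambda>k k'. T (a,k) (b,k'))"
proof (intro ext)
  fix k l
  have "(mmul (op13 T) (op23 P) :: ('d \<times> 'd \<times> 'b) op) (a,i,k) (b,j,l) = mmul (op23 P) (op13 T) (a,i,k) (b,j,l)"
    using assms by simp
  then show "mmul (\<lambda>k k'. T (a,k) (b,k')) (\<lambda>k l. P (i,k) (j,l)) k l = mmul (\<lambda>k l. P (i,k) (j,l)) (\<lambda>k k'. T (a,k) (b,k')) k l"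
    unfolding mmul_def op13_def op23_def sum_UNIV_triple
    by (simp add: sum.delta sum.delta')
qed

lemma op12_idm: "op12 idm = idm"
  unfolding op12_def idm_def by (auto intro!: ext)
lemma flip_idm: "flip idm = idm"
  unfolding flip_def idm_def by (auto intro!: ext)
lemma mmul_idm_left: "mmul idm (X::('i::finite) op) = X"
  unfolding mmul_def idm_def by (auto intro!: ext simp: sum.delta sum.delta')
lemma mmul_idm_right: "mmul (X::('i::finite) op) idm = X"
  unfolding mmul_def idm_def by (auto intro!: ext simp: sum.delta sum.delta')


lemma mlim_shift_minus: "mlim F M \<Longrightarrow> mlim (\<lambda>u. F (u - c)) M"
  using mlim_shift[of F M "-c"] by simp

theorem corollary14:
  fixes f :: "'a::finite \<Rightarrow> 'a \<Rightarrow> 'a \<Rightarrow> complex"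
    and \<rho> :: "nat \<Rightarrow> 'a \<Rightarrow> ('d::finite) op"
    and R :: "nat \<Rightarrow> nat \<Rightarrow> complex \<Rightarrow> ('d \<times> 'd) op"
    and SR SK :: "complex set"
    and K :: "complex \<Rightarrow> ('d \<times> ('b::finite)) op"
    and \<kappa>t :: "('d \<times> 'b) op"
  assumes "simple_lie_algebra f"
    and "\<forall>i\<in>{1,2}. is_rep f (\<rho> i) \<and> faithful (\<rho> i)"
    and "quasi_classical_R_family f \<rho> R SR"
    and "K_matrix R SR K SK"
    and "K_irreducible K SK"
    and "\<forall>x y. (\<lambda>u. K u x y - \<kappa>t x y) \<in> O[at_infinity](\<lambda>u. 1 / u)"
  shows "\<exists>\<kappa> :: 'd op. \<forall>a b a' b'. \<kappa>t (a, b) (a', b') = \<kappa> a a' * (if b = b' then 1 else 0)"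
proof -
  have finSR: "finite SR" and Rasym: "\<And>i j x y. i \<in> {1,2} \<Longrightarrow> j \<in> {1,2} \<Longrightarrow>
      (\<lambda>u. R i j u x y - (idm x y + casimir f (\<rho> i) (\<rho> j) x y / u)) \<in> O[at_infinity](\<lambda>u. 1 / u ^ 2)"
    using assms(3) unfolding quasi_classical_R_family_def by blast+
  have finSK: "finite SK" and BYBE: "\<And>u v. u \<notin> SK \<Longrightarrow> v \<notin> SK \<Longrightarrow> u - v \<notin> SR \<Longrightarrow> u + v \<notin> SR \<Longrightarrow>
        mmul (mmul (mmul (op12 (R 1 1 (u - v))) (op13 (K u))) (op12 (flip (R 1 2 (u + v)))))
             (op23 (K v))
        = (mmul (mmul (mmul (op23 (K v)) (op12 (R 1 2 (u + v)))) (op13 (K u)))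
             (op12 (flip (R 2 2 (u - v)))) :: ('d \<times> 'd \<times> 'b) op)"
    using assms(4) unfolding K_matrix_def by blast+
  have Rlim: "mlim (R i j) idm" if "i \<in> {1,2}" "j \<in> {1,2}" for i j
    unfolding mlim_def
  proof (intro allI)
    fix x y
    let ?C = "casimir f (\<rho> i) (\<rho> j) x y"
    have d: "((\<lambda>u. R i j u x y - (idm x y + ?C / u)) \<longlongrightarrow> 0) at_infinity"
      by (rule bigo_to_zero[OF Rasym[OF that] inv_u2_0])
    have e: "((\<lambda>u. idm x y + ?C * (1 / u)) \<longlongrightarrow> idm x y + ?C * 0) at_infinity"
      by (rule tendsto_add[OF tendsto_const tendsto_mult[OF tendsto_const inv_u_0]])
    have "((\<lambda>u. (R i j u x y - (idm x y + ?C / u)) + (idm x y + ?C * (1 / u))) \<longlongrightarrow> 0 + (idm x y + ?C * 0)) at_infinity"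
      by (rule tendsto_add[OF d e])
    then show "((\<lambda>u. R i j u x y) \<longlongrightarrow> idm x y) at_infinity" by simp
  qed
  have Klim: "mlim K \<kappa>t" unfolding mlim_def
  proof (intro allI)
    fix x y
    have "((\<lambda>u. K u x y - \<kappa>t x y) \<longlongrightarrow> 0) at_infinity"
      using bigo_to_zero[OF _ inv_u_0] assms(6) by blast
    then have "((\<lambda>u. (K u x y - \<kappa>t x y) + \<kappa>t x y) \<longlongrightarrow> 0 + \<kappa>t x y) at_infinity"
      by (rule tendsto_add[OF _ tendsto_const])
    then show "((\<lambda>u. K u x y) \<longlongrightarrow> \<kappa>t x y) at_infinity" by simp
  qed
  have comm: "mmul (op13 \<kappa>t) (op23 (K v)) = (mmul (op23 (K v)) (op13 \<kappa>t) :: ('d \<times> 'd \<times> 'b) op)"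
    if v: "v \<notin> SK" for v
  proof -
    define LH where "LH = (\<lambda>u. mmul (mmul (mmul (op12 (R 1 1 (u - v))) (op13 (K u))) (op12 (flip (R 1 2 (u + v)))))
             (op23 (K v)) :: ('d \<times> 'd \<times> 'b) op)"
    define RH where "RH = (\<lambda>u. mmul (mmul (mmul (op23 (K v)) (op12 (R 1 2 (u + v)))) (op13 (K u)))
             (op12 (flip (R 2 2 (u - v)))) :: ('d \<times> 'd \<times> 'b) op)"
    have "mlim LH (mmul (mmul (mmul (op12 idm) (op13 \<kappa>t)) (op12 (flip idm))) (op23 (K v)))"
      unfolding LH_def
      by (intro mlim_mmul mlim_op12 mlim_op13 mlim_op23 mlim_flip mlim_const Klim
          mlim_shift_minus[OF Rlim] mlim_shift[OF Rlim]) auto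
    then have L: "mlim LH (mmul (op13 \<kappa>t) (op23 (K v)))"
      by (simp add: op12_idm flip_idm mmul_idm_left mmul_idm_right)
    have "mlim RH (mmul (mmul (mmul (op23 (K v)) (op12 idm)) (op13 \<kappa>t)) (op12 (flip idm)))"
      unfolding RH_def
      by (intro mlim_mmul mlim_op12 mlim_op13 mlim_op23 mlim_flip mlim_const Klim
          mlim_shift_minus[OF Rlim] mlim_shift[OF Rlim]) auto
    then have Rl: "mlim RH (mmul (op23 (K v)) (op13 \<kappa>t))"
      by (simp add: op12_idm flip_idm mmul_idm_left mmul_idm_right)
    have ev: "eventually (\<lambda>u. LH u = RH u) at_infinity"
    proof -
      have "eventually (\<lambda>u. u \<notin> SK \<and> u \<notin> (\<lambda>s. s + v) ` SR \<and> u \<notin> (\<lambda>s. s - v) ` SR) at_infinity"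
        using finSK finSR by (intro eventually_conj eventually_notin_finite finite_imageI)
      then show ?thesis
      proof (rule eventually_mono)
        fix u assume u: "u \<notin> SK \<and> u \<notin> (\<lambda>s. s + v) ` SR \<and> u \<notin> (\<lambda>s. s - v) ` SR"
        have "u - v \<notin> SR"
        proof
          assume "u - v \<in> SR" then have "(u - v) + v \<in> (\<lambda>s. s + v) ` SR" by blast
          with u show False by simp
        qed
        moreover have "u + v \<notin> SR"
        proof
          assume "u + v \<in> SR" then have "(u + v) - v \<in> (\<lambda>s. s - v) ` SR" by blast
          with u show False by simp
        qed
        moreover have "u \<notin> SK" using u by simp
        ultimately show "LH u = RH u" unfolding LH_def RH_def by (intro BYBE v)
      qed
    qed
    show ?thesis
    proof (intro ext)
      fix x y
      have l1: "((\<lambda>u. LH u x y) \<longlongrightarrow> mmul (op13 \<kappa>t) (op23 (K v)) x y) at_infinity"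
        using L unfolding mlim_def by blast
      have l2: "((\<lambda>u. RH u x y) \<longlongrightarrow> mmul (op23 (K v)) (op13 \<kappa>t) x y) at_infinity"
        using Rl unfolding mlim_def by blast
      have "eventually (\<lambda>u. LH u x y = RH u x y) at_infinity"
        using ev by (rule eventually_mono) simp
      then have l3: "((\<lambda>u. RH u x y) \<longlongrightarrow> mmul (op13 \<kappa>t) (op23 (K v)) x y) at_infinity"
        using l1 by (rule tendsto_cong[THEN iffD1])
      show "mmul (op13 \<kappa>t) (op23 (K v)) x y = mmul (op23 (K v)) (op13 \<kappa>t) x y"
        using tendsto_unique[OF at_infinity_nbot l3 l2] .
    qed
  qed
  define S where "S = {P. \<exists>u i j. u \<notin> SK \<and> P = (\<lambda>k l. K u (i, k) (j, l))}"
  have irr: "\<not> (\<exists>W. csubspace W \<and> W \<noteq> {\<lambda>_. 0} \<and> W \<noteq> UNIV \<and> (\<forall>P\<in>S. \<forall>w\<in>W. mv P w \<in> W))"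
  proof
    assume "\<exists>W. csubspace W \<and> W \<noteq> {\<lambda>_. 0} \<and> W \<noteq> UNIV \<and> (\<forall>P\<in>S. \<forall>w\<in>W. mv P w \<in> W)"
    then obtain W where W: "csubspace W" "W \<noteq> {\<lambda>_. 0}" "W \<noteq> UNIV"
      and inv: "\<And>P w. P \<in> S \<Longrightarrow> w \<in> W \<Longrightarrow> mv P w \<in> W" by blast
    have "\<forall>u. u \<notin> SK \<longrightarrow> (\<forall>i j. \<forall>w\<in>W. mv (\<lambda>k l. K u (i, k) (j, l)) w \<in> W)"
    proof (intro allI impI ballI)
      fix u i j w assume "u \<notin> SK" "w \<in> W"
      moreover have "(\<lambda>k l. K u (i, k) (j, l)) \<in> S" unfolding S_def using \<open>u \<notin> SK\<close> by blast
      ultimately show "mv (\<lambda>k l. K u (i, k) (j, l)) w \<in> W" using inv by blast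
    qed
    with W assms(5) show False unfolding K_irreducible_def by blast
  qed
  have sc: "\<exists>c. \<forall>k l. \<kappa>t (a, k) (b, l) = c * idm k l" for a b
  proof -
    have "\<exists>c. \<forall>k l. (\<lambda>k k'. \<kappa>t (a,k) (b,k')) k l = c * idm k l"
    proof (rule schur[OF _ irr])
      fix P assume "P \<in> S"
      then obtain u i j where u: "u \<notin> SK" and P: "P = (\<lambda>k l. K u (i, k) (j, l))" unfolding S_def by blast
      show "mmul (\<lambda>k k'. \<kappa>t (a,k) (b,k')) P = mmul P (\<lambda>k k'. \<kappa>t (a,k) (b,k'))"
        unfolding P by (rule extract_comm[OF comm[OF u]])
    qed
    then show ?thesis by simp
  qed
  define \<kappa> where "\<kappa> = (\<lambda>a b. SOME c. \<forall>k l. \<kappa>t (a, k) (b, l) = c * idm k l)"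
  have "\<forall>k l. \<kappa>t (a, k) (b, l) = \<kappa> a b * idm k l" for a b
    unfolding \<kappa>_def using someI_ex[OF sc[of a b]] .
  then show ?thesis unfolding idm_def by blast
qed

end
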